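(* The function $f$ on permutations defined by $f(\alpha)=c(\sigma_m^{-1}\alpha)$ for $\alpha\in\mathbb{S}_m$ (the number of faces, i.e. boundary components, of the hypermap of $\alpha$) satisfies the generalized Vassiliev relations in the following strong sense: for every generalized Vassiliev element $E(\gamma,q,v)=\sum_{j\in v}(\alpha_{j-1}-\alpha_j)$, the terms can be matched into pairs $(\alpha_{j-1},\alpha_{j'})$ with opposite signs and $f(\alpha_{j-1})=f(\alpha_{j'})$. In particular, for any function $g$ of one integer variable, the linear extension of $\alpha\mapsto g(f(\alpha))$ vanishes on all generalized Vassiliev elements (so the genus of a hyper chord diagram is a generalized weight system).
   Context: $\sigma_m=(1,\dots,m)$; $c(\beta)$ denotes the number of cycles of a permutation $\beta$. Generalized Vassiliev elements: let $m\ge2$, $\gamma\in\mathbb{S}_{m-1}$, $q\in[m-1]\cup\{*\}$. For $t\in\{0,\dots,m-1\}$ let $\alpha_t\in\mathbb{S}_m$ be obtained by inserting a new point $x$ (free leg) into the line $1<\dots<m-1$ in the gap between $t$ and $t+1$, relabeling all points $1,\dots,m$ in order, letting the permutation act as $\gamma$ on old points except $q\mapsto x\mapsto\gamma(q)$ if $q\ne*$, and $x$ fixed if $q=*$. For a cycle $v$ of $\gamma$, $E(\gamma,q,v)=\sum_{j\in v}(\alpha_{j-1}-\alpha_j)\in\mathbb{C}[\mathbb{S}_m]$. *)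

theory Defs
  imports Complex_Main "HOL-Combinatorics.Combinatorics"
begin

text \<open>Permutations of [m] = {1..m} are functions nat => nat permuting {1..m}
  (identity outside).\<close>

definition ncycles :: "nat \<Rightarrow> (nat \<Rightarrow> nat) \<Rightarrow> nat" where
  "ncycles m \<beta> = card ((\<lambda>x. orbit \<beta> x) ` {1..m})"

definition sigma :: "nat \<Rightarrow> nat \<Rightarrow> nat" where
  "sigma m i = (if 1 \<le> i \<and> i < m then i + 1 else if i = m then 1 else i)"

definition faces :: "nat \<Rightarrow> (nat \<Rightarrow> nat) \<Rightarrow> nat" where
  "faces m \<alpha> = ncycles m (inv (sigma m) \<circ> \<alpha>)"

text \<open>Relabelling when the new point is inserted in the gap between t and t+1:
  old point i becomes ins t i, new point is t+1; old t is the inverse.\<close>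
definition ins :: "nat \<Rightarrow> nat \<Rightarrow> nat" where
  "ins t i = (if i \<le> t then i else i + 1)"

definition old :: "nat \<Rightarrow> nat \<Rightarrow> nat" where
  "old t y = (if y \<le> t then y else y - 1)"

text \<open>alpha_t for gamma on {1..m-1} and q (None stands for *).\<close>
definition valpha :: "nat \<Rightarrow> (nat \<Rightarrow> nat) \<Rightarrow> nat option \<Rightarrow> nat \<Rightarrow> nat \<Rightarrow> nat" where
  "valpha m \<gamma> q t y =
    (if y = t + 1 then (case q of None \<Rightarrow> t + 1 | Some q' \<Rightarrow> ins t (\<gamma> q'))
     else if 1 \<le> y \<and> y \<le> m then
       (if q = Some (old t y) then t + 1 else ins t (\<gamma> (old t y)))
     else y)"

end

theory Submission
  imports Defs
begin


definition cnt :: "('a \<Rightarrow> 'a) \<Rightarrow> 'a set \<Rightarrow> nat" where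
  "cnt p S = card (orbit p ` S)"

lemma orbit_eq_perm:
  assumes "permutation f" "y \<in> orbit f x" shows "orbit f y = orbit f x"
  by (meson assms cyclic_on_orbit' orbit_cyclic_eq3)

lemma merge_orbit:
  fixes p :: "'a \<Rightarrow> 'a"
  assumes perm: "p permutes S" and fin: "finite S" and ab: "a \<in> S" "b \<in> S"
    and nb: "b \<notin> orbit p a"
  shows "orbit (p \<circ> transpose a b) a = orbit p a \<union> orbit p b"
proof -
  define p' where "p' = p \<circ> transpose a b"
  have pp: "permutation p" using perm fin permutation_permutes by blast
  have pp': "permutation p'" unfolding p'_def
    using pp by (simp add: permutation_compose permutation_swap_id)
  have ab': "a \<noteq> b" using nb pp permutation_self_in_orbit by metis
  have na: "a \<notin> orbit p b" using nb pp by (metis orbit_eq_perm permutation_self_in_orbit)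
  have p'a: "p' a = p b" and p'b: "p' b = p a" using ab' by (auto simp: p'_def transpose_def)
  have p'o: "p' y = p y" if "y \<noteq> a" "y \<noteq> b" for y using that by (auto simp: p'_def transpose_def)
  have A: "y \<in> orbit p' b" if "y \<in> orbit p a" for y
    using that
  proof induction
    case base then show ?case using p'b orbit.base by metis
  next
    case (step y)
    show ?case proof (cases "y = a")
      case True then show ?thesis using p'b orbit.base by metis
    next
      case False
      then have "y \<noteq> b" using step nb by auto
      then show ?thesis using p'o[OF False] step orbit.step by metis
    qed
  qed
  have B: "y \<in> orbit p' a" if "y \<in> orbit p b" for y
    using that
  proof induction
    case base then show ?case using p'a orbit.base by metis
  next
    case (step y)
    show ?case proof (cases "y = b")
      case True then show ?thesis using p'a orbit.base by metis
    next
      case False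
      then have "y \<noteq> a" using step na by auto
      then show ?thesis using p'o[OF _ False] step orbit.step by metis
    qed
  qed
  have "b \<in> orbit p' a" using B pp permutation_self_in_orbit by metis
  then have eqo: "orbit p' b = orbit p' a" using pp' orbit_eq_perm by metis
  have C: "y \<in> orbit p a \<union> orbit p b" if "y \<in> orbit p' a" for y
    using that
  proof induction
    case base then show ?case using p'a orbit.base by (metis UnI2)
  next
    case (step y)
    then show ?case
    proof (cases "y = a \<or> y = b")
      case True then show ?thesis using p'a p'b orbit.base by (metis UnI1 UnI2)
    next
      case False
      then show ?thesis using p'o step orbit.step by (metis Un_iff)
    qed
  qed
  show ?thesis unfolding p'_def[symmetric] using A B C eqo by blast
qed

lemma merge_other:
  fixes p :: "'a \<Rightarrow> 'a"
  assumes perm: "p permutes S" and fin: "finite S"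
    and x: "x \<notin> orbit p a" "x \<notin> orbit p b"
  shows "orbit (p \<circ> transpose a b) x = orbit p x"
proof -
  define p' where "p' = p \<circ> transpose a b"
  have pp: "permutation p" using perm fin permutation_permutes by blast
  have nab: "y \<noteq> a \<and> y \<noteq> b" if "y \<in> orbit p x" for y
    using that x pp by (metis orbit_eq_perm permutation_self_in_orbit)
  have xab: "x \<noteq> a" "x \<noteq> b" using x pp permutation_self_in_orbit by metis+
  have p'o: "p' y = p y" if "y \<noteq> a" "y \<noteq> b" for y using that by (auto simp: p'_def transpose_def)
  have "orbit p' x = orbit p x"
  proof (rule orbit_cong)
    show "x \<in> orbit p x" using pp permutation_self_in_orbit by metis
    show "\<And>s. s \<in> orbit p x \<Longrightarrow> p' s = p s" using nab p'o by blast
  qed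
  then show ?thesis by (simp add: p'_def)
qed

lemma merge_cnt:
  fixes p :: "'a \<Rightarrow> 'a"
  assumes perm: "p permutes S" and fin: "finite S" and ab: "a \<in> S" "b \<in> S"
    and nb: "b \<notin> orbit p a"
  shows "cnt (p \<circ> transpose a b) S + 1 = cnt p S"
proof -
  define p' where "p' = p \<circ> transpose a b"
  define A where "A = orbit p a"
  define B where "B = orbit p b"
  have pp: "permutation p" using perm fin permutation_permutes by blast
  have pp': "permutation p'" unfolding p'_def
    using pp by (simp add: permutation_compose permutation_swap_id)
  have M: "orbit p' a = A \<union> B" using merge_orbit[OF assms] by (simp add: p'_def A_def B_def)
  have O: "orbit p' x = orbit p x" if "x \<notin> A" "x \<notin> B" for x
    using merge_other[OF perm fin] that by (simp add: p'_def A_def B_def)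
  have sa: "x \<in> orbit p x" for x using pp permutation_self_in_orbit by metis
  have sa': "x \<in> orbit p' x" for x using pp' permutation_self_in_orbit by metis
  have bB: "b \<in> B" "a \<in> A" using sa A_def B_def by auto
  have AB: "A \<noteq> B" using nb bB A_def by auto
  have eq: "orbit p' ` S = (orbit p ` S - {A, B}) \<union> {A \<union> B}"
  proof (intro set_eqI iffI)
    fix X assume "X \<in> orbit p' ` S"
    then obtain x where x: "x \<in> S" "X = orbit p' x" by auto
    show "X \<in> (orbit p ` S - {A, B}) \<union> {A \<union> B}"
    proof (cases "x \<in> A \<union> B")
      case True
      then have "X = A \<union> B" using x M pp' orbit_eq_perm by metis
      then show ?thesis by simp
    next
      case False
      then have "X = orbit p x" using O x by auto
      moreover have "orbit p x \<noteq> A" "orbit p x \<noteq> B" using False sa by auto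
      ultimately show ?thesis using x by auto
    qed
  next
    fix X assume "X \<in> (orbit p ` S - {A, B}) \<union> {A \<union> B}"
    then consider "X = A \<union> B" | x where "x \<in> S" "X = orbit p x" "X \<noteq> A" "X \<noteq> B" by auto
    then show "X \<in> orbit p' ` S"
    proof cases
      case 1 then show ?thesis using M ab by auto
    next
      case 2
      have "x \<notin> A" using 2 pp orbit_eq_perm A_def by metis
      moreover have "x \<notin> B" using 2 pp orbit_eq_perm B_def by metis
      ultimately have "X = orbit p' x" using O 2 by simp
      then show ?thesis using 2(1) by blast
    qed
  qed
  have AS: "A \<in> orbit p ` S" "B \<in> orbit p ` S" using ab A_def B_def by auto
  have notin: "A \<union> B \<notin> orbit p ` S - {A, B}"
  proof
    assume "A \<union> B \<in> orbit p ` S - {A, B}"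
    then obtain x where "x \<in> S" "A \<union> B = orbit p x" "orbit p x \<noteq> A" by auto
    moreover have "a \<in> orbit p x" using calculation bB by auto
    ultimately show False using pp orbit_eq_perm A_def by metis
  qed
  have finO: "finite (orbit p ` S)" using fin by simp
  have "card (orbit p' ` S) = card (orbit p ` S - {A, B}) + 1"
    using eq notin finO by simp
  moreover have "card (orbit p ` S - {A, B}) + 2 = card (orbit p ` S)"
  proof -
    have "{A, B} \<subseteq> orbit p ` S" using AS by auto
    then have "card (orbit p ` S - {A, B}) = card (orbit p ` S) - card {A, B}"
      using finO by (simp add: card_Diff_subset)
    moreover have "card {A, B} = 2" using AB by simp
    moreover have "card {A,B} \<le> card (orbit p ` S)" using finO \<open>{A, B} \<subseteq> _\<close> card_mono by blast
    ultimately show ?thesis by simp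
  qed
  ultimately show ?thesis unfolding cnt_def p'_def by simp
qed



lemma split_sep:
  fixes p :: "'a \<Rightarrow> 'a"
  assumes perm: "p permutes S" and fin: "finite S" and ab: "a \<noteq> b"
    and bo: "b \<in> orbit p a"
  shows "b \<notin> orbit (p \<circ> transpose a b) a"
proof -
  define p' where "p' = p \<circ> transpose a b"
  have pp: "permutation p" using perm fin permutation_permutes by blast
  have sa: "a \<in> orbit p a" using pp permutation_self_in_orbit by metis
  define L where "L = funpow_dist1 p a a"
  have orbL: "orbit p a = (\<lambda>n. (p ^^ n) a) ` {0..<L}"
    unfolding L_def by (rule orbit_conv_funpow_dist1[OF sa])
  have dist: "(p ^^ i) a \<noteq> (p ^^ k) a" if "i < L" "k < L" "i \<noteq> k" for i k
    using funpow_neq_less_funpow_dist1[OF sa] that L_def by blast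
  have pL: "(p ^^ L) a = a" unfolding L_def by (rule funpow_dist1_prop[OF sa])
  obtain j where j: "j < L" "b = (p ^^ j) a" using bo orbL by auto
  have j0: "j \<noteq> 0" using j ab by (metis funpow_0)
  define W where "W = {(p ^^ i) a | i. i = 0 \<or> (j < i \<and> i < L)}"
  have p'a: "p' a = p b" and p'o: "p' y = p y" if "y \<noteq> a" "y \<noteq> b" for y
    using that ab by (auto simp: p'_def)
  have pa: "p' a = p b" using ab by (simp add: p'_def)
  have stepW: "p ((p ^^ i) a) \<in> W" if "j \<le> i" "i < L" for i
  proof (cases "Suc i = L")
    case True
    then have "p ((p ^^ i) a) = (p ^^ 0) a" using pL by (metis comp_apply funpow.simps(2) funpow_0)
    then show ?thesis unfolding W_def by blast
  next
    case False
    then have "p ((p ^^ i) a) = (p ^^ Suc i) a \<and> j < Suc i \<and> Suc i < L" using that by auto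
    then show ?thesis unfolding W_def by blast
  qed
  have sub: "y \<in> W" if "y \<in> orbit p' a" for y
    using that
  proof induction
    case base then show ?case using pa j stepW by auto
  next
    case (step y)
    then obtain i where i: "y = (p ^^ i) a" "i = 0 \<or> (j < i \<and> i < L)" unfolding W_def by blast
    show ?case
    proof (cases "i = 0")
      case True then show ?thesis using i pa j stepW by auto
    next
      case False
      then have "y \<noteq> a" using i dist[of i 0] by auto
      moreover have "y \<noteq> b" using i j dist[of i j] False by auto
      ultimately show ?thesis using p'o i stepW False by auto
    qed
  qed
  have "b \<notin> W"
  proof
    assume "b \<in> W"
    then obtain i where i: "b = (p ^^ i) a" "i = 0 \<or> (j < i \<and> i < L)" unfolding W_def by blast
    then show False using dist[of i j] j j0 by (cases "i = 0") auto
  qed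
  then show ?thesis using sub p'_def by blast
qed

lemma split_cnt:
  fixes p :: "'a \<Rightarrow> 'a"
  assumes perm: "p permutes S" and fin: "finite S" and ab: "a \<in> S" "b \<in> S" "a \<noteq> b"
    and bo: "b \<in> orbit p a"
  shows "cnt (p \<circ> transpose a b) S = cnt p S + 1"
proof -
  define p' where "p' = p \<circ> transpose a b"
  have pp': "p' permutes S" unfolding p'_def
    using perm ab by (simp add: permutes_compose permutes_swap_id)
  have "b \<notin> orbit p' a" unfolding p'_def using split_sep[OF perm fin ab(3) bo] .
  from merge_cnt[OF pp' fin ab(1,2) this] have "cnt (p' \<circ> transpose a b) S + 1 = cnt p' S" .
  moreover have "p' \<circ> transpose a b = p" unfolding p'_def by (simp add: comp_assoc)
  ultimately show ?thesis unfolding p'_def by simp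
qed


definition spr :: "nat \<Rightarrow> nat \<Rightarrow> nat" where
  "spr n z = (if z = 1 then n else if 2 \<le> z \<and> z \<le> n then z - 1 else z)"
definition Rb :: "nat \<Rightarrow> nat \<Rightarrow> nat \<Rightarrow> nat" where
  "Rb n b z = (if z = 0 then spr n b else if z = b then 0 else spr n z)"
definition hh :: "nat \<Rightarrow> nat \<Rightarrow> nat" where
  "hh t y = (if y = 0 then t + 1 else ins t y)"
lemma inj_sigma: "m \<ge> 1 \<Longrightarrow> inj (sigma m)"
  unfolding inj_def sigma_def by auto
lemma sigma_hh:
  assumes "m \<ge> 2" "n = m - 1" "t \<le> n" "z \<le> n"
  shows "sigma m (hh t (Rb n (if t = n then 1 else t + 1) z)) = hh t z"
proof (cases "z = 0")
  case True then show ?thesis using assms unfolding sigma_def hh_def Rb_def spr_def ins_def by auto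
next
  case False
  show ?thesis
  proof (cases "t = n")
    case True then show ?thesis using assms False unfolding sigma_def hh_def Rb_def spr_def ins_def by auto
  next
    case f2: False
    show ?thesis
    proof (cases "z = t + 1")
      case True then show ?thesis using assms False f2 unfolding sigma_def hh_def Rb_def spr_def ins_def by auto
    next
      case f3: False then show ?thesis using assms False f2 unfolding sigma_def hh_def Rb_def spr_def ins_def by auto
    qed
  qed
qed
definition Gq :: "(nat \<Rightarrow> nat) \<Rightarrow> nat option \<Rightarrow> nat \<Rightarrow> nat" where
  "Gq \<gamma> q y = (case q of None \<Rightarrow> \<gamma> y | Some q' \<Rightarrow> (if y = 0 then \<gamma> q' else if y = q' then 0 else \<gamma> y))"
lemma gamma0: "(\<gamma>::nat\<Rightarrow>nat) permutes {1..n} \<Longrightarrow> \<gamma> 0 = 0"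
  by (rule permutes_not_in) auto
lemma gamma_in: "(\<gamma>::nat\<Rightarrow>nat) permutes {1..n} \<Longrightarrow> y \<in> {1..n} \<Longrightarrow> \<gamma> y \<in> {1..n}"
  using permutes_in_image by fastforce
lemmas gamma_facts = gamma0 gamma_in
lemma valpha_hh:
  assumes "m \<ge> 2" "n = m - 1" "t \<le> n" "y \<le> n" and g: "\<gamma> permutes {1..n}"
    and q: "case q of None \<Rightarrow> True | Some q' \<Rightarrow> q' \<in> {1..n}"
  shows "valpha m \<gamma> q t (hh t y) = hh t (Gq \<gamma> q y)"
proof -
  note gf = gamma_facts[OF g]
  show ?thesis
  proof (cases q)
    case None
    show ?thesis
    proof (cases "y = 0")
      case True
      then show ?thesis using assms gf None unfolding valpha_def hh_def Gq_def ins_def old_def by auto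
    next
      case False
      then have "\<gamma> y \<in> {1..n}" using gf assms by auto
      then show ?thesis using assms False None unfolding valpha_def hh_def Gq_def ins_def old_def
        by (auto split: if_splits)
    qed
  next
    case (Some q')
    then have q': "q' \<in> {1..n}" using q by simp
    have g1: "\<gamma> q' \<in> {1..n}" using gf q' by blast
    show ?thesis
    proof (cases "y = 0")
      case True
      then show ?thesis using assms g1 Some unfolding valpha_def hh_def Gq_def ins_def old_def by auto
    next
      case False
      then have "\<gamma> y \<in> {1..n}" using gf assms by auto
      then show ?thesis using assms False Some q' unfolding valpha_def hh_def Gq_def ins_def old_def
        by (auto split: if_splits)
    qed
  qed
qed
lemma hh_bij:
  assumes "m \<ge> 2" "n = m - 1" "t \<le> n"
  shows "bij_betw (hh t) {0..n} {1..m}"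
  by (rule bij_betw_byWitness[where f' = "\<lambda>w. if w = t + 1 then 0 else old t w"])
    (use assms in \<open>auto simp: hh_def ins_def old_def\<close>)


definition ssucc :: "nat \<Rightarrow> nat \<Rightarrow> nat" where
  "ssucc n z = (if z = n then 1 else if 1 \<le> z \<and> z < n then z + 1 else z)"

lemma conj_cnt:
  fixes h :: "'a \<Rightarrow> 'b"
  assumes fin: "finite S" and bij: "bij_betw h S T" and pS: "\<And>y. y \<in> S \<Longrightarrow> p y \<in> S"
    and eq: "\<And>y. y \<in> S \<Longrightarrow> \<beta> (h y) = h (p y)"
  shows "card (orbit \<beta> ` T) = cnt p S"
proof -
  have oS: "orbit p y \<subseteq> S" if "y \<in> S" for y
  proof
    fix z assume "z \<in> orbit p y" then show "z \<in> S"
    proof induction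
      case base then show ?case using pS that by blast
    next
      case (step z) then show ?case using pS by blast
    qed
  qed
  have oe: "orbit \<beta> (h y) = h ` orbit p y" if y: "y \<in> S" for y
  proof (intro set_eqI iffI)
    fix z assume "z \<in> orbit \<beta> (h y)"
    then show "z \<in> h ` orbit p y"
    proof induction
      case base
      have "\<beta> (h y) = h (p y)" using eq[OF y] .
      moreover have "p y \<in> orbit p y" by (rule orbit.base)
      ultimately show ?case by blast
    next
      case (step z)
      then obtain w where w: "w \<in> orbit p y" "z = h w" by auto
      then have "w \<in> S" using oS y by auto
      then have "\<beta> z = h (p w)" using eq w by simp
      moreover have "p w \<in> orbit p y" using w(1) by (rule orbit.step)
      ultimately show ?case by blast
    qed
  next
    fix z assume "z \<in> h ` orbit p y"
    then obtain w where w: "w \<in> orbit p y" "z = h w" by auto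
    have "h w \<in> orbit \<beta> (h y)" using w(1)
    proof induction
      case base
      have "h (p y) = \<beta> (h y)" using eq[OF y] by simp
      then show ?case using orbit.base[of \<beta> "h y"] by simp
    next
      case (step w)
      then have "w \<in> S" using oS y by auto
      then have "h (p w) = \<beta> (h w)" using eq by simp
      then show ?case using orbit.step[OF step.IH] by simp
    qed
    then show "z \<in> orbit \<beta> (h y)" using w by simp
  qed
  have T: "T = h ` S" using bij by (simp add: bij_betw_def)
  have "orbit \<beta> ` T = image h ` (orbit p ` S)"
  proof -
    have "orbit \<beta> ` T = (\<lambda>y. orbit \<beta> (h y)) ` S" unfolding T image_image ..
    also have "\<dots> = (\<lambda>y. h ` orbit p y) ` S" using oe by (rule image_cong[OF refl])
    also have "\<dots> = image h ` (orbit p ` S)" by (simp add: image_image)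
    finally show ?thesis .
  qed
  moreover have "inj_on (image h) (orbit p ` S)"
  proof -
    have "inj_on h S" using bij by (simp add: bij_betw_def)
    then have "inj_on (image h) (Pow S)" by (rule inj_on_image_Pow)
    moreover have "orbit p ` S \<subseteq> Pow S" using oS by auto
    ultimately show ?thesis using inj_on_subset by blast
  qed
  ultimately show ?thesis unfolding cnt_def by (simp add: card_image)
qed

lemma cnt_cong:
  assumes "\<And>y. y \<in> S \<Longrightarrow> f y \<in> S" "\<And>y. y \<in> S \<Longrightarrow> f y = g y"
  shows "cnt f S = cnt g S"
proof -
  have "orbit f x = orbit g x" if "x \<in> S" for x
    using orbit_cong0[of x S f g] assms that by auto
  then have "orbit f ` S = orbit g ` S" by auto
  then show ?thesis unfolding cnt_def by simp
qed

lemma invsigma_hh: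
  assumes "m \<ge> 2" "n = m - 1" "t \<le> n" "z \<le> n"
  shows "inv (sigma m) (hh t z) = hh t (Rb n (if t = n then 1 else t + 1) z)"
proof -
  have "inj (sigma m)" using inj_sigma assms by simp
  then show ?thesis using sigma_hh[OF assms] by (metis inv_f_f)
qed

lemma faces_cnt:
  assumes "m \<ge> 2" "n = m - 1" "t \<le> n" and g: "\<gamma> permutes {1..n}"
    and q: "case q of None \<Rightarrow> True | Some q' \<Rightarrow> q' \<in> {1..n}"
  shows "faces m (valpha m \<gamma> q t) = cnt (Rb n (if t = n then 1 else t + 1) \<circ> Gq \<gamma> q) {0..n}"
proof -
  have GS: "Gq \<gamma> q y \<in> {0..n}" if "y \<in> {0..n}" for y
  proof (cases "y = 0")
    case True then show ?thesis using gamma_facts[OF g] q unfolding Gq_def by (auto split: option.splits)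
  next
    case False
    then have "\<gamma> y \<in> {1..n}" using gamma_facts[OF g] that by auto
    then show ?thesis using gamma_facts[OF g] q unfolding Gq_def by (auto split: option.splits)
  qed
  have RS: "Rb n b z \<in> {0..n}" if "z \<in> {0..n}" "b \<le> n" for z b
    using that unfolding Rb_def spr_def by auto
  show ?thesis unfolding faces_def ncycles_def
  proof (rule conj_cnt)
    show "finite {0..n}" by simp
    show "bij_betw (hh t) {0..n} {1..m}" using hh_bij assms by blast
    show "(Rb n (if t = n then 1 else t + 1) \<circ> Gq \<gamma> q) y \<in> {0..n}" if "y \<in> {0..n}" for y
      using GS RS that assms by auto
    show "(inv (sigma m) \<circ> valpha m \<gamma> q t) (hh t y) = hh t ((Rb n (if t = n then 1 else t + 1) \<circ> Gq \<gamma> q) y)"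
      if "y \<in> {0..n}" for y
      using valpha_hh[OF assms(1-3) _ g q] invsigma_hh[OF assms(1-3)] GS that by auto
  qed
qed



lemma spr_permutes: "n \<ge> 1 \<Longrightarrow> spr n permutes {1..n}"
  apply (rule bij_imp_permutes)
   apply (rule bij_betw_byWitness[where f' = "ssucc n"])
      apply (auto simp: spr_def ssucc_def)
  done

lemma spr_ssucc: "k \<in> {1..n} \<Longrightarrow> spr n (ssucc n k) = k"
  by (auto simp: spr_def ssucc_def)

lemma ssucc_in: "k \<in> {1..n} \<Longrightarrow> ssucc n k \<in> {1..n}"
  by (auto simp: ssucc_def)

lemma rho_perm:
  assumes "n \<ge> 1" "(\<gamma>::nat\<Rightarrow>nat) permutes {1..n}"
  shows "(spr n \<circ> \<gamma>) permutes {0..n}"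
proof -
  have "(spr n \<circ> \<gamma>) permutes {1..n}" using assms spr_permutes permutes_compose by blast
  then show ?thesis by (rule permutes_subset) auto
qed

lemma Pb_Some:
  assumes g: "(\<gamma>::nat\<Rightarrow>nat) permutes {1..n}" and b: "b \<in> {1..n}" and q: "q' \<in> {1..n}"
    and y: "y \<in> {0..n}"
  shows "(Rb n b \<circ> Gq \<gamma> (Some q')) y = ((spr n \<circ> \<gamma>) \<circ> transpose (inv \<gamma> b) 0 \<circ> transpose 0 q') y"
proof -
  define u where "u = inv \<gamma> b"
  have gu: "\<gamma> u = b" using permutes_inverses(1)[OF g] u_def by simp
  have uiff: "\<gamma> z = b \<longleftrightarrow> z = u" for z using permutes_inv_eq[OF g] u_def by metis
  have u1: "u \<in> {1..n}" using permutes_inv[OF g] b u_def permutes_in_image by metis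
  have g0: "\<gamma> 0 = 0" using gamma0[OF g] .
  have gq: "\<gamma> q' \<in> {1..n}" using gamma_in[OF g q] .
  have gy: "y \<noteq> 0 \<Longrightarrow> \<gamma> y \<in> {1..n}" using gamma_in[OF g] y by auto
  show ?thesis unfolding u_def[symmetric]
    using u1 q b gq gy g0 uiff[of q'] uiff[of y] gu
    by (cases "y = 0"; cases "y = q'") (auto simp: Rb_def Gq_def transpose_def spr_def)
qed

lemma Pb_None:
  assumes g: "(\<gamma>::nat\<Rightarrow>nat) permutes {1..n}" and b: "b \<in> {1..n}"
    and y: "y \<in> {0..n}"
  shows "(Rb n b \<circ> Gq \<gamma> None) y = ((spr n \<circ> \<gamma>) \<circ> transpose (inv \<gamma> b) 0) y"
proof -
  define u where "u = inv \<gamma> b"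
  have gu: "\<gamma> u = b" using permutes_inverses(1)[OF g] u_def by simp
  have uiff: "\<gamma> z = b \<longleftrightarrow> z = u" for z using permutes_inv_eq[OF g] u_def by metis
  have u1: "u \<in> {1..n}" using permutes_inv[OF g] b u_def permutes_in_image by metis
  have g0: "\<gamma> 0 = 0" using gamma0[OF g] .
  have gy: "y \<noteq> 0 \<Longrightarrow> \<gamma> y \<in> {1..n}" using gamma_in[OF g] y by auto
  show ?thesis unfolding u_def[symmetric]
    using u1 b gy g0 uiff[of y] gu
    by (cases "y = 0") (auto simp: Rb_def Gq_def transpose_def spr_def)
qed

lemma mu_facts:
  assumes n: "n \<ge> 1" and g: "(\<gamma>::nat\<Rightarrow>nat) permutes {1..n}" and u: "u \<in> {1..n}"
  shows "cnt ((spr n \<circ> \<gamma>) \<circ> transpose u 0) {0..n} + 1 = cnt (spr n \<circ> \<gamma>) {0..n}"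
    and "orbit ((spr n \<circ> \<gamma>) \<circ> transpose u 0) 0 = orbit (spr n \<circ> \<gamma>) u \<union> {0}"
proof -
  define r where "r = spr n \<circ> \<gamma>"
  have rp: "r permutes {0..n}" using rho_perm[OF n g] r_def by simp
  have pr: "permutation r" using rp permutation_permutes by blast
  have r0: "r 0 = 0" using rp by (simp add: permutes_not_in r_def spr_def gamma0[OF g])
  have o0: "orbit r 0 = {0}" using r0 orbit_eq_singleton_iff by metis
  have nu: "0 \<notin> orbit r u"
  proof
    assume "0 \<in> orbit r u"
    then have "orbit r 0 = orbit r u" using orbit_eq_perm[OF pr] by blast
    then have "u \<in> {0}" using o0 permutation_self_in_orbit[OF pr, of u] by simp
    then show False using u by simp
  qed
  have uS: "u \<in> {0..n}" "(0::nat) \<in> {0..n}" using u by auto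
  show "cnt (r \<circ> transpose u 0) {0..n} + 1 = cnt r {0..n}"
    using merge_cnt[OF rp _ uS nu] by simp
  have mo: "orbit (r \<circ> transpose u 0) u = orbit r u \<union> {0}"
    using merge_orbit[OF rp _ uS nu] o0 by simp
  have pm: "permutation (r \<circ> transpose u 0)"
    using pr by (simp add: permutation_compose permutation_swap_id)
  have "0 \<in> orbit (r \<circ> transpose u 0) u" using mo by simp
  then show "orbit (r \<circ> transpose u 0) 0 = orbit r u \<union> {0}"
    using orbit_eq_perm[OF pm] mo by metis
qed



lemma cnt_Pb:
  assumes n: "n \<ge> 1" and g: "(\<gamma>::nat\<Rightarrow>nat) permutes {1..n}" and b: "b \<in> {1..n}"
    and q: "case q of None \<Rightarrow> True | Some q' \<Rightarrow> q' \<in> {1..n}"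
  shows "cnt (Rb n b \<circ> Gq \<gamma> q) {0..n} =
    (case q of None \<Rightarrow> cnt (spr n \<circ> \<gamma>) {0..n} - 1
     | Some q' \<Rightarrow> (if q' \<in> orbit (spr n \<circ> \<gamma>) (inv \<gamma> b) then cnt (spr n \<circ> \<gamma>) {0..n}
                   else cnt (spr n \<circ> \<gamma>) {0..n} - 2))"
proof -
  define r where "r = spr n \<circ> \<gamma>"
  define u where "u = inv \<gamma> b"
  have u1: "u \<in> {1..n}" using permutes_inv[OF g] b u_def permutes_in_image by metis
  have rp: "r permutes {0..n}" using rho_perm[OF n g] r_def by simp
  define \<mu> where "\<mu> = r \<circ> transpose u 0"
  have uS: "u \<in> {0..n}" "(0::nat) \<in> {0..n}" using u1 by auto
  have mp: "\<mu> permutes {0..n}" unfolding \<mu>_def using rp uS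
    by (simp add: permutes_compose permutes_swap_id)
  note mf = mu_facts[OF n g u1, folded r_def, folded \<mu>_def]
  show ?thesis
  proof (cases q)
    case None
    have "cnt (Rb n b \<circ> Gq \<gamma> q) {0..n} = cnt \<mu> {0..n}"
    proof (rule sym, rule cnt_cong)
      show "\<mu> y \<in> {0..n}" if "y \<in> {0..n}" for y using mp that permutes_in_image by metis
      show "\<mu> y = (Rb n b \<circ> Gq \<gamma> q) y" if "y \<in> {0..n}" for y
        using Pb_None[OF g b that] None by (simp add: \<mu>_def r_def u_def)
    qed
    then show ?thesis using mf(1) None r_def by simp
  next
    case (Some q')
    then have q': "q' \<in> {1..n}" using q by simp
    have qS: "q' \<in> {0..n}" using q' by auto
    have "cnt (Rb n b \<circ> Gq \<gamma> q) {0..n} = cnt (\<mu> \<circ> transpose 0 q') {0..n}"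
    proof (rule sym, rule cnt_cong)
      have "(\<mu> \<circ> transpose 0 q') permutes {0..n}" using mp uS qS
        by (simp add: permutes_compose permutes_swap_id)
      then show "(\<mu> \<circ> transpose 0 q') y \<in> {0..n}" if "y \<in> {0..n}" for y
        using that permutes_in_image by metis
      show "(\<mu> \<circ> transpose 0 q') y = (Rb n b \<circ> Gq \<gamma> q) y" if "y \<in> {0..n}" for y
        using Pb_Some[OF g b q' that] Some by (simp add: \<mu>_def r_def u_def)
    qed
    moreover have "q' \<in> orbit \<mu> 0 \<longleftrightarrow> q' \<in> orbit r u" using mf(2) q' by auto
    moreover have "q' \<in> orbit \<mu> 0 \<Longrightarrow> cnt (\<mu> \<circ> transpose 0 q') {0..n} = cnt \<mu> {0..n} + 1"
      using split_cnt[OF mp _ uS(2) qS] q' by auto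
    moreover have "q' \<notin> orbit \<mu> 0 \<Longrightarrow> cnt (\<mu> \<circ> transpose 0 q') {0..n} + 1 = cnt \<mu> {0..n}"
      using merge_cnt[OF mp _ uS(2) qS] by auto
    ultimately show ?thesis using mf(1) Some by (auto simp: r_def u_def)
  qed
qed

theorem mainTheorem4:
  fixes m :: nat and \<gamma> :: "nat \<Rightarrow> nat" and q :: "nat option" and a :: nat
    and v :: "nat set"
  assumes "m \<ge> 2"
    and "\<gamma> permutes {1..m-1}"
    and "case q of None \<Rightarrow> True | Some q' \<Rightarrow> q' \<in> {1..m-1}"
    and "a \<in> {1..m-1}"
    and "v = orbit \<gamma> a"
  shows "(\<exists>\<pi>. bij_betw \<pi> v v \<and>
            (\<forall>j\<in>v. faces m (valpha m \<gamma> q (j - 1)) = faces m (valpha m \<gamma> q (\<pi> j))))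
       \<and> (\<forall>g :: int \<Rightarrow> complex.
            (\<Sum>j\<in>v. g (int (faces m (valpha m \<gamma> q (j - 1))))
                   - g (int (faces m (valpha m \<gamma> q j)))) = 0)"
proof -
  define n where "n = m - 1"
  have n1: "n \<ge> 1" using assms(1) n_def by simp
  have g: "\<gamma> permutes {1..n}" using assms(2) n_def by simp
  have q: "case q of None \<Rightarrow> True | Some q' \<Rightarrow> q' \<in> {1..n}" using assms(3) unfolding n_def .
  have pg: "permutation \<gamma>" using g permutation_permutes by blast
  have vsub: "v \<subseteq> {1..n}" using permutes_orbit_subset[OF g] assms(4,5) n_def by simp
  define F where "F b = cnt (Rb n b \<circ> Gq \<gamma> q) {0..n}" for b
  define r where "r = spr n \<circ> \<gamma>"
  have rpm: "permutation r" using rho_perm[OF n1 g] r_def permutation_permutes by blast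
  have key: "faces m (valpha m \<gamma> q (j - 1)) = faces m (valpha m \<gamma> q (inv \<gamma> j))"
    if j: "j \<in> v" for j
  proof -
    have j1: "j \<in> {1..n}" using j vsub by auto
    define k where "k = inv \<gamma> j"
    have k1: "k \<in> {1..n}" using permutes_inv[OF g] j1 k_def permutes_in_image by metis
    have gk: "\<gamma> k = j" using permutes_inverses(1)[OF g] k_def by simp
    have e1: "(if j - 1 = n then 1 else j - 1 + 1) = j" "j - 1 \<le> n" using j1 by auto
    have "faces m (valpha m \<gamma> q (j - 1)) = F j"
      using faces_cnt[OF assms(1) n_def e1(2) g q] unfolding F_def e1(1) .
    moreover have "faces m (valpha m \<gamma> q k) = F (ssucc n k)"
      using faces_cnt[OF assms(1) n_def _ g q, of k] k1 unfolding F_def ssucc_def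
      by (cases "k = n") auto
    moreover have "F j = F (ssucc n k)"
    proof -
      define u2 where "u2 = inv \<gamma> (ssucc n k)"
      have "\<gamma> u2 = ssucc n k" using permutes_inverses(1)[OF g] u2_def by simp
      then have "r u2 = k" using spr_ssucc[OF k1] r_def by simp
      then have oe: "orbit r k = orbit r u2" using permutation_orbit_step[OF rpm] by metis
      have A: "F j = (case q of None \<Rightarrow> cnt r {0..n} - 1
         | Some q' \<Rightarrow> (if q' \<in> orbit r k then cnt r {0..n} else cnt r {0..n} - 2))"
        using cnt_Pb[OF n1 g j1 q] unfolding F_def r_def k_def by simp
      have B: "F (ssucc n k) = (case q of None \<Rightarrow> cnt r {0..n} - 1
         | Some q' \<Rightarrow> (if q' \<in> orbit r u2 then cnt r {0..n} else cnt r {0..n} - 2))"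
        using cnt_Pb[OF n1 g ssucc_in[OF k1] q] unfolding F_def r_def u2_def by simp
      show ?thesis unfolding A B oe ..
    qed
    ultimately show ?thesis using k_def by simp
  qed
  have bij: "bij_betw (inv \<gamma>) v v"
  proof -
    have ov: "orbit (inv \<gamma>) a = v" using orbit_inv_eq[OF pg] assms(5) by simp
    have i1: "inv \<gamma> x \<in> v" if "x \<in> v" for x using that ov orbit.step by metis
    have i2: "\<gamma> x \<in> v" if "x \<in> v" for x using that assms(5) orbit.step by metis
    have "inv \<gamma> ` v = v"
    proof
      show "inv \<gamma> ` v \<subseteq> v" using i1 by auto
      show "v \<subseteq> inv \<gamma> ` v"
      proof
        fix x assume "x \<in> v"
        then have "\<gamma> x \<in> v" "inv \<gamma> (\<gamma> x) = x" using i2 permutes_inverses(2)[OF g] by auto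
        then show "x \<in> inv \<gamma> ` v" by (metis imageI)
      qed
    qed
    moreover have "inj_on (inv \<gamma>) v"
      using permutes_inv[OF g] permutes_inj_on by blast
    ultimately show ?thesis by (simp add: bij_betw_def)
  qed
  show ?thesis
  proof
    show "\<exists>\<pi>. bij_betw \<pi> v v \<and>
            (\<forall>j\<in>v. faces m (valpha m \<gamma> q (j - 1)) = faces m (valpha m \<gamma> q (\<pi> j)))"
      using bij key by blast
    show "\<forall>g :: int \<Rightarrow> complex.
            (\<Sum>j\<in>v. g (int (faces m (valpha m \<gamma> q (j - 1))))
                   - g (int (faces m (valpha m \<gamma> q j)))) = 0"
    proof
      fix G :: "int \<Rightarrow> complex"
      have "(\<Sum>j\<in>v. G (int (faces m (valpha m \<gamma> q (j - 1)))))
          = (\<Sum>j\<in>v. G (int (faces m (valpha m \<gamma> q (inv \<gamma> j)))))"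
        by (rule sum.cong[OF refl]) (simp only: key)
      also have "\<dots> = (\<Sum>j\<in>v. G (int (faces m (valpha m \<gamma> q j))))"
        using sum.reindex_bij_betw[OF bij, of "\<lambda>j. G (int (faces m (valpha m \<gamma> q j)))"] by simp
      finally show "(\<Sum>j\<in>v. G (int (faces m (valpha m \<gamma> q (j - 1))))
                   - G (int (faces m (valpha m \<gamma> q j)))) = 0"
        by (simp add: sum_subtractf)
    qed
  qed
qed


end
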